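(* Let $X$ be a topological space in which every open set is a union of countably many clopen sets. The following are equivalent: (1) $X$ has the bounded-ideal convergence property; (2) for each family $\{f_d\}_{d\in\mathbb{N}\times\mathbb{N}}$ of Borel real-valued functions on $X$ which $\mathcal{I}_b$-converges to $0$, there is $A\in\mathcal{I}_b^*$ such that $\{f_d\}_{d\in A}$ converges pointwise to $0$; (3) for each family $\{f_d\}_{d\in\mathbb{N}\times\mathbb{N}}$ of Borel real-valued functions on $X$ which $\mathcal{I}_b$-converges to a Borel function $f$, there is $A\in\mathcal{I}_b^*$ such that $\{f_d\}_{d\in A}$ converges pointwise to $f$; (4) for each family $\{f_d\}_{d\in\mathbb{N}\times\mathbb{N}}$ of Borel real-valued functions on $X$ which $\mathcal{I}_b$-converges to a function $f:X\to\mathbb{R}$, there is $A\in\mathcal{I}_b^*$ such that $\{f_d\}_{d\in A}$ converges pointwise to $f$.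
   Context: For $h\in\mathbb{N}^{\mathbb{N}}$ let $A_h=\{(n,m)\in\mathbb{N}\times\mathbb{N}:m\le h(n)\}$. The bounded-ideal is $\mathcal{I}_b=\{B\subseteq\mathbb{N}\times\mathbb{N}:\exists h\in\mathbb{N}^{\mathbb{N}},\ B\subseteq A_h\}$ and $\mathcal{I}_b^*=\{(\mathbb{N}\times\mathbb{N})\setminus B:B\in\mathcal{I}_b\}$. A family $\{f_d\}_{d\in\mathbb{N}\times\mathbb{N}}$ of real functions on $X$ $\mathcal{I}_b$-converges to $f$ if for each $x\in X$ and $\epsilon>0$, $\{d:|f_d(x)-f(x)|<\epsilon\}\in\mathcal{I}_b^*$. For infinite $A$, $\{f_d\}_{d\in A}$ converges pointwise to $f$ if for each $x$ and $\epsilon>0$ only finitely many $d\in A$ have $|f_d(x)-f(x)|\ge\epsilon$. $X$ has the bounded-ideal convergence property if for each family $\{f_d\}_{d\in\mathbb{N}\times\mathbb{N}}$ of continuous real-valued functions on $X$ which $\mathcal{I}_b$-converges to $0$ there is $A\in\mathcal{I}_b^*$ with $\{f_d\}_{d\in A}$ converging pointwise to $0$. *)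

theory Defs
  imports "HOL-Analysis.Analysis"
begin

definition A_h :: "(nat \<Rightarrow> nat) \<Rightarrow> (nat \<times> nat) set" where
  "A_h h = {(n, m). m \<le> h n}"

definition I_b :: "(nat \<times> nat) set set" where
  "I_b = {B. \<exists>h. B \<subseteq> A_h h}"

definition I_b_dual :: "(nat \<times> nat) set set" where
  "I_b_dual = {UNIV - B | B. B \<in> I_b}"

definition Ib_converges :: "(nat \<times> nat \<Rightarrow> 'a \<Rightarrow> real) \<Rightarrow> ('a \<Rightarrow> real) \<Rightarrow> bool" where
  "Ib_converges fs f \<longleftrightarrow>
     (\<forall>x. \<forall>\<epsilon>>0. {d. \<bar>fs d x - f x\<bar> < \<epsilon>} \<in> I_b_dual)"

definition pointwise_conv_on :: "(nat \<times> nat) set \<Rightarrow> (nat \<times> nat \<Rightarrow> 'a \<Rightarrow> real) \<Rightarrow> ('a \<Rightarrow> real) \<Rightarrow> bool" where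
  "pointwise_conv_on A fs f \<longleftrightarrow>
     (\<forall>x. \<forall>\<epsilon>>0. finite {d \<in> A. \<bar>fs d x - f x\<bar> \<ge> \<epsilon>})"

definition bounded_ideal_convergence_property :: "'a::topological_space itself \<Rightarrow> bool" where
  "bounded_ideal_convergence_property TYPE('a) \<longleftrightarrow>
     (\<forall>fs :: nat \<times> nat \<Rightarrow> 'a \<Rightarrow> real.
        (\<forall>d. continuous_on UNIV (fs d)) \<longrightarrow> Ib_converges fs (\<lambda>_. 0) \<longrightarrow>
        (\<exists>A \<in> I_b_dual. pointwise_conv_on A fs (\<lambda>_. 0)))"

end

theory Submission
  imports Defs
begin

lemma ind_cont:
  assumes "open (L::'a::topological_space set)" "closed L"
  shows "continuous_on UNIV (indicator L :: 'a \<Rightarrow> real)"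
  unfolding continuous_on_topological
proof (intro ballI allI impI)
  fix x :: 'a and B :: "real set" assume "open B" "indicator L x \<in> B"
  show "\<exists>A. open A \<and> x \<in> A \<and> (\<forall>y\<in>UNIV. y \<in> A \<longrightarrow> indicator L y \<in> B)"
  proof (cases "x \<in> L")
    case True then show ?thesis using assms \<open>indicator L x \<in> B\<close>
      by (intro exI[of _ L]) auto
  next
    case False then show ?thesis using assms \<open>indicator L x \<in> B\<close>
      by (intro exI[of _ "- L"]) (auto simp: open_Compl)
  qed
qed
lemma meas: fixes g :: "'a::topological_space \<Rightarrow> real" assumes "g \<in> borel_measurable borel"
 shows "{x. e \<le> g x} \<in> sets borel"
  using measurable_sets[OF assms, of "{e..}"] by (auto simp: vimage_def)



definition goodS :: "'a set set \<Rightarrow> bool" where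
 "goodS S \<longleftrightarrow> (\<forall>L::nat\<times>nat\<Rightarrow>'a set. (\<forall>d. L d \<in> S) \<longrightarrow> (\<forall>x n. finite {m. x \<in> L (n,m)}) \<longrightarrow>
     (\<exists>h. \<forall>x. finite {(n,m). h n < m \<and> x \<in> L (n,m)}))"

definition tame :: "'a::topological_space set \<Rightarrow> bool" where
 "tame B \<longleftrightarrow> (\<exists>C::nat\<Rightarrow>'a set. (\<forall>k. open (C k) \<and> closed (C k)) \<and> (\<forall>x. \<exists>K. \<forall>k::nat\<ge>K. (x \<in> C k \<longleftrightarrow> x \<in> B)))"

lemma goodSD:
  fixes L :: "nat \<times> nat \<Rightarrow> 'a set"
  assumes "goodS S" "\<And>d. L d \<in> S" "\<And>x n. finite {m. x \<in> L (n,m)}"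
  shows "\<exists>h. \<forall>x. finite {(n,m). h n < m \<and> x \<in> L (n,m)}"
  using assms unfolding goodS_def by blast

lemma goodS_mono: "goodS S' \<Longrightarrow> S \<subseteq> S' \<Longrightarrow> goodS S"
  unfolding goodS_def by blast

lemma modulus:
  fixes C :: "nat \<Rightarrow> nat \<Rightarrow> 'a::topological_space set" and B :: "nat \<Rightarrow> 'a set"
  assumes g: "goodS {c::'a set. open c \<and> closed c}"
    and cl: "\<And>i k. open (C i k) \<and> closed (C i k)"
    and conv: "\<And>i x. \<exists>K. \<forall>k\<ge>K. (x \<in> C i k \<longleftrightarrow> x \<in> B i)"
  shows "\<exists>g. \<forall>x. finite {i. \<exists>k>g i. \<not> (x \<in> C i k \<longleftrightarrow> x \<in> B i)}"
proof -
  define L where "L = (\<lambda>(i,k). (C i k - C i (Suc k)) \<union> (C i (Suc k) - C i k))"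
  have Lcl: "\<forall>d. L d \<in> {c. open c \<and> closed c}"
    using cl by (auto simp: L_def intro!: open_Un closed_Un open_Diff closed_Diff)
  have Lfin: "\<forall>x i. finite {k. x \<in> L (i,k)}"
  proof (intro allI)
    fix x i
    obtain K where K: "\<forall>k\<ge>K. (x \<in> C i k \<longleftrightarrow> x \<in> B i)" using conv by blast
    have "{k. x \<in> L (i,k)} \<subseteq> {..<K}"
    proof
      fix k assume "k \<in> {k. x \<in> L (i,k)}"
      then have "\<not> (x \<in> C i k \<longleftrightarrow> x \<in> C i (Suc k))" by (auto simp: L_def)
      then show "k \<in> {..<K}" using K[rule_format, of k] K[rule_format, of "Suc k"] by (cases "K \<le> k") auto
    qed
    then show "finite {k. x \<in> L (i,k)}" using finite_subset by blast
  qed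
  obtain h where h: "\<forall>x. finite {(n,m). h n < m \<and> x \<in> L (n,m)}"
  proof -
    have "\<exists>h. \<forall>x. finite {(n,m). h n < m \<and> x \<in> L (n,m)}"
      apply (rule goodSD[OF g])
      using Lcl Lfin by auto
    then show ?thesis using that by blast
  qed
  show ?thesis
  proof (intro exI allI)
    fix x
    let ?F = "{(n,m). h n < m \<and> x \<in> L (n,m)}"
    have "{i. \<exists>k>h i. \<not> (x \<in> C i k \<longleftrightarrow> x \<in> B i)} \<subseteq> fst ` ?F"
    proof
      fix i assume "i \<in> {i. \<exists>k>h i. \<not> (x \<in> C i k \<longleftrightarrow> x \<in> B i)}"
      then obtain k where k: "k > h i" "\<not> (x \<in> C i k \<longleftrightarrow> x \<in> B i)" by blast
      show "i \<in> fst ` ?F"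
      proof (rule ccontr)
        assume nf: "i \<notin> fst ` ?F"
        have st: "\<forall>k'>h i. x \<notin> L (i,k')"
        proof (intro allI impI)
          fix k' assume "k' > h i"
          show "x \<notin> L (i,k')"
          proof
            assume "x \<in> L (i,k')"
            then have "(i,k') \<in> ?F" using \<open>k' > h i\<close> by auto
            then show False using nf by force
          qed
        qed
        have const: "\<And>j. (x \<in> C i (Suc (h i) + j) \<longleftrightarrow> x \<in> C i (Suc (h i)))"
        proof -
          fix j show "(x \<in> C i (Suc (h i) + j) \<longleftrightarrow> x \<in> C i (Suc (h i)))"
          proof (induction j)
            case 0 then show ?case by simp
          next
            case (Suc j)
            have "x \<notin> L (i, Suc (h i) + j)" using st by simp
            then have "(x \<in> C i (Suc (Suc (h i) + j)) \<longleftrightarrow> x \<in> C i (Suc (h i) + j))"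
              by (auto simp: L_def)
            then show ?case using Suc by simp
          qed
        qed
        obtain K where K: "\<forall>k\<ge>K. (x \<in> C i k \<longleftrightarrow> x \<in> B i)" using conv by blast
        have "x \<in> C i k \<longleftrightarrow> x \<in> C i (Suc (h i))"
          using const[of "k - Suc (h i)"] k(1) by simp
        moreover have "x \<in> C i (Suc (h i) + K) \<longleftrightarrow> x \<in> C i (Suc (h i))" by (rule const)
        moreover have "x \<in> C i (Suc (h i) + K) \<longleftrightarrow> x \<in> B i" using K by simp
        ultimately show False using k(2) by blast
      qed
    qed
    then show "finite {i. \<exists>k>h i. \<not> (x \<in> C i k \<longleftrightarrow> x \<in> B i)}"
      using h finite_subset by blast
  qed
qed




lemma tame_clopen: "open B \<Longrightarrow> closed B \<Longrightarrow> tame B"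
  unfolding tame_def by (rule exI[of _ "\<lambda>_. B"]) auto

lemma tame_Compl: "tame B \<Longrightarrow> tame (UNIV - B)"
  unfolding tame_def
proof (elim exE conjE)
  fix C :: "nat \<Rightarrow> 'a set"
  assume c: "\<forall>k. open (C k) \<and> closed (C k)" and cv: "\<forall>x. \<exists>K. \<forall>k\<ge>K. (x \<in> C k) = (x \<in> B)"
  show "\<exists>C::nat\<Rightarrow>'a set. (\<forall>k. open (C k) \<and> closed (C k)) \<and> (\<forall>x. \<exists>K. \<forall>k\<ge>K. (x \<in> C k) = (x \<in> UNIV - B))"
    apply (rule exI[of _ "\<lambda>k. - C k"])
    using c cv by (auto simp: open_Compl closed_Compl)
qed

lemma tame_Union:
  fixes B :: "nat \<Rightarrow> 'a::topological_space set"
  assumes g: "goodS {c::'a set. open c \<and> closed c}"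
    and t: "\<And>n. tame (B n)"
  shows "tame (\<Union>n. B n)"
proof -
  have "\<forall>n. \<exists>C::nat\<Rightarrow>'a set. (\<forall>k. open (C k) \<and> closed (C k)) \<and> (\<forall>x. \<exists>K. \<forall>k\<ge>K. (x \<in> C k \<longleftrightarrow> x \<in> B n))"
  proof
    fix n show "\<exists>C::nat\<Rightarrow>'a set. (\<forall>k. open (C k) \<and> closed (C k)) \<and> (\<forall>x. \<exists>K. \<forall>k\<ge>K. (x \<in> C k \<longleftrightarrow> x \<in> B n))"
      using t[of n] unfolding tame_def .
  qed
  note ex = this
  obtain C :: "nat \<Rightarrow> nat \<Rightarrow> 'a set" where cc0: "\<forall>n. (\<forall>k. open (C n k) \<and> closed (C n k)) \<and> (\<forall>x. \<exists>K. \<forall>k\<ge>K. (x \<in> C n k \<longleftrightarrow> x \<in> B n))"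
    apply (insert choice[OF ex]) apply (erule exE) apply (rule that) apply assumption done
  have cc: "(\<forall>k. open (C n k) \<and> closed (C n k)) \<and> (\<forall>x. \<exists>K. \<forall>k\<ge>K. (x \<in> C n k \<longleftrightarrow> x \<in> B n))" for n
    by (rule spec[OF cc0])
  have c: "open (C n k) \<and> closed (C n k)" for n k using conjunct1[OF cc[of n]] by (rule spec)
  have cv: "\<exists>K. \<forall>k\<ge>K. (x \<in> C n k \<longleftrightarrow> x \<in> B n)" for n x using conjunct2[OF cc[of n]] by (rule spec)
  define Kf where "Kf n x = (SOME K. \<forall>k\<ge>K. (x \<in> C n k \<longleftrightarrow> x \<in> B n))" for n x
  have Kf: "\<And>n x k. k \<ge> Kf n x \<Longrightarrow> (x \<in> C n k \<longleftrightarrow> x \<in> B n)"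
  proof -
    fix n x k assume "k \<ge> Kf n x"
    have "\<forall>k\<ge>Kf n x. (x \<in> C n k \<longleftrightarrow> x \<in> B n)" unfolding Kf_def by (rule someI_ex[OF cv[where n=n and x=x]])
    then show "(x \<in> C n k \<longleftrightarrow> x \<in> B n)" using \<open>k \<ge> Kf n x\<close> by simp
  qed
  from modulus[where C=C and B=B, OF g c cv]
  obtain h where h0: "\<forall>x. finite {i. \<exists>k>h i. \<not> (x \<in> C i k \<longleftrightarrow> x \<in> B i)}" ..
  note h = h0[rule_format]
  define D where "D k = (\<Union>n\<in>{..k}. C n (max k (Suc (h n))))" for k
  have Dcl: "open (D k) \<and> closed (D k)" for k
    unfolding D_def using c by (auto intro!: open_UN closed_UN)
  have Dcv: "\<exists>K. \<forall>k\<ge>K. (x \<in> D k \<longleftrightarrow> x \<in> (\<Union>n. B n))" for x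
  proof (cases "x \<in> (\<Union>n. B n)")
    case True
    then obtain n0 where n0: "x \<in> B n0" by blast
    show ?thesis
    proof (intro exI allI impI)
      fix k assume "max n0 (Kf n0 x) \<le> k"
      then have "n0 \<le> k" "Kf n0 x \<le> max k (Suc (h n0))" by auto
      then have "x \<in> C n0 (max k (Suc (h n0)))" using Kf[of n0 x "max k (Suc (h n0))"] n0 by blast
      then have "x \<in> D k" using \<open>n0 \<le> k\<close> unfolding D_def by blast
      then show "(x \<in> D k \<longleftrightarrow> x \<in> (\<Union>n. B n))" using True by simp
    qed
  next
    case False
    define F where "F = {i. \<exists>k>h i. \<not> (x \<in> C i k \<longleftrightarrow> x \<in> B i)}"
    have fF: "finite F" unfolding F_def by (rule h)
    show ?thesis
    proof (intro exI allI impI)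
      fix k assume kK: "(\<Sum>n\<in>F. Kf n x) \<le> k"
      have "x \<notin> C n (max k (Suc (h n)))" if "n \<le> k" for n
      proof (cases "n \<in> F")
        case True
        then have "Kf n x \<le> (\<Sum>n\<in>F. Kf n x)" using fF by (intro member_le_sum) auto
        then have "Kf n x \<le> max k (Suc (h n))" using kK by linarith
        then have "(x \<in> C n (max k (Suc (h n))) \<longleftrightarrow> x \<in> B n)" by (rule Kf)
        then show ?thesis using False by auto
      next
        case nF: False
        then have "(x \<in> C n (max k (Suc (h n))) \<longleftrightarrow> x \<in> B n)" unfolding F_def by auto
        then show ?thesis using False by auto
      qed
      then have "x \<notin> D k" unfolding D_def by auto
      then show "(x \<in> D k \<longleftrightarrow> x \<in> (\<Union>n. B n))" using False by simp
    qed
  qed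
  show ?thesis unfolding tame_def
    apply (rule exI[of _ D]) apply (intro conjI allI Dcv) using Dcl by auto
qed

lemma tame_open:
  assumes g: "goodS {c::'a::topological_space set. open c \<and> closed c}"
    and cb: "\<forall>U :: 'a set. open U \<longrightarrow> (\<exists>C. countable C \<and> (\<forall>c\<in>C. open c \<and> closed c) \<and> U = \<Union>C)"
    and U: "open (U::'a set)"
  shows "tame U"
proof -
  obtain Cs where Cs: "countable Cs" "\<forall>c\<in>Cs. open c \<and> closed c" "U = \<Union>Cs" using cb[rule_format, OF U] by (elim exE conjE) (rule that)
  show ?thesis
  proof (cases "Cs = {}")
    case True then show ?thesis using Cs by (intro tame_clopen) auto
  next
    case False
    have "U = (\<Union>n. from_nat_into Cs n)" using range_from_nat_into[OF False Cs(1)] Cs(3) by simp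
    moreover have "tame (from_nat_into Cs n)" for n
      using Cs(2) from_nat_into[OF False, of n] by (intro tame_clopen) auto
    ultimately show ?thesis using tame_Union[OF g, of "from_nat_into Cs"] by simp
  qed
qed

lemma tame_borel:
  assumes g: "goodS {c::'a::topological_space set. open c \<and> closed c}"
    and cb: "\<forall>U :: 'a set. open U \<longrightarrow> (\<exists>C. countable C \<and> (\<forall>c\<in>C. open c \<and> closed c) \<and> U = \<Union>C)"
    and B: "B \<in> sets (borel :: 'a measure)"
  shows "tame B"
proof -
  have "B \<in> sigma_sets UNIV {S. open S}" using B by (simp add: sets_borel)
  then show ?thesis
  proof (induction rule: sigma_sets.induct)
    case (Basic a) then show ?case by (intro tame_open[OF g cb]) simp
  next
    case Empty then show ?case by (intro tame_clopen) auto
  next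
    case (Compl a) then show ?case by (intro tame_Compl) simp
  next
    case (Union a) then show ?case by (intro tame_Union[OF g]) simp
  qed
qed




lemma good_tame:
  assumes g: "goodS {c::'a::topological_space set. open c \<and> closed c}"
  shows "goodS {B::'a set. tame B}"
  unfolding goodS_def
proof (intro allI impI)
  fix T :: "nat \<times> nat \<Rightarrow> 'a set"
  assume tT: "\<forall>d. T d \<in> {B. tame B}" and cf: "\<forall>x n. finite {m. x \<in> T (n,m)}"
  have ex: "\<forall>d. \<exists>C::nat \<Rightarrow> 'a set. (\<forall>k. open (C k) \<and> closed (C k)) \<and> (\<forall>x. \<exists>K. \<forall>k\<ge>K. (x \<in> C k \<longleftrightarrow> x \<in> T d))"
  proof
    fix d show "\<exists>C::nat \<Rightarrow> 'a set. (\<forall>k. open (C k) \<and> closed (C k)) \<and> (\<forall>x. \<exists>K. \<forall>k\<ge>K. (x \<in> C k \<longleftrightarrow> x \<in> T d))"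
      using tT[rule_format, of d] unfolding tame_def by simp
  qed
  obtain C :: "nat \<times> nat \<Rightarrow> nat \<Rightarrow> 'a set" where cc0: "\<forall>d. (\<forall>k. open (C d k) \<and> closed (C d k)) \<and> (\<forall>x. \<exists>K. \<forall>k\<ge>K. (x \<in> C d k \<longleftrightarrow> x \<in> T d))"
    apply (insert choice[OF ex]) apply (erule exE) apply (rule that) apply assumption done
  have cc: "(\<forall>k. open (C d k) \<and> closed (C d k)) \<and> (\<forall>x. \<exists>K. \<forall>k\<ge>K. (x \<in> C d k \<longleftrightarrow> x \<in> T d))" for d
    by (rule spec[OF cc0])
  define C' where "C' i = C (prod_decode i)" for i
  define B' where "B' i = T (prod_decode i)" for i
  have c': "open (C' i k) \<and> closed (C' i k)" for i k
    unfolding C'_def using conjunct1[OF cc[of "prod_decode i"]] by (rule spec)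
  have cv': "\<exists>K. \<forall>k\<ge>K. (x \<in> C' i k \<longleftrightarrow> x \<in> B' i)" for i x
    unfolding C'_def B'_def using conjunct2[OF cc[of "prod_decode i"]] by (rule spec)
  from modulus[where C=C' and B=B', OF g c' cv']
  obtain gg where gg0: "\<forall>x. finite {i. \<exists>k>gg i. \<not> (x \<in> C' i k \<longleftrightarrow> x \<in> B' i)}" ..
  define M where "M d = C d (Suc (gg (prod_encode d)))" for d
  have Mcl: "M d \<in> {c. open c \<and> closed c}" for d
    unfolding M_def using conjunct1[OF cc[of d]] by simp
  have Dfin: "finite {d. \<not> (x \<in> M d \<longleftrightarrow> x \<in> T d)}" for x
  proof -
    have "{d. \<not> (x \<in> M d \<longleftrightarrow> x \<in> T d)} \<subseteq> prod_decode ` {i. \<exists>k>gg i. \<not> (x \<in> C' i k \<longleftrightarrow> x \<in> B' i)}"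
    proof
      fix d assume d: "d \<in> {d. \<not> (x \<in> M d \<longleftrightarrow> x \<in> T d)}"
      have nd: "\<not> (x \<in> C' (prod_encode d) (Suc (gg (prod_encode d))) \<longleftrightarrow> x \<in> B' (prod_encode d))"
        using d by (simp add: M_def C'_def B'_def)
      have "\<exists>k>gg (prod_encode d). \<not> (x \<in> C' (prod_encode d) k \<longleftrightarrow> x \<in> B' (prod_encode d))"
        by (rule exI[of _ "Suc (gg (prod_encode d))"]) (use nd in simp)
      then have "prod_encode d \<in> {i. \<exists>k>gg i. \<not> (x \<in> C' i k \<longleftrightarrow> x \<in> B' i)}"
        by (rule CollectI)
      moreover have "d = prod_decode (prod_encode d)" by simp
      ultimately show "d \<in> prod_decode ` {i. \<exists>k>gg i. \<not> (x \<in> C' i k \<longleftrightarrow> x \<in> B' i)}"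
        by (rule rev_image_eqI)
    qed
    then show ?thesis by (rule finite_subset[OF _ finite_imageI[OF gg0[rule_format]]])
  qed
  have Mcf: "finite {m. x \<in> M (n,m)}" for x n
  proof -
    have "{m. x \<in> M (n,m)} \<subseteq> {m. x \<in> T (n,m)} \<union> snd ` {d. \<not> (x \<in> M d \<longleftrightarrow> x \<in> T d)}"
    proof
      fix m assume m: "m \<in> {m. x \<in> M (n,m)}"
      show "m \<in> {m. x \<in> T (n,m)} \<union> snd ` {d. \<not> (x \<in> M d \<longleftrightarrow> x \<in> T d)}"
      proof (cases "x \<in> T (n,m)")
        case True then show ?thesis by simp
      next
        case False
        then have "(n,m) \<in> {d. \<not> (x \<in> M d \<longleftrightarrow> x \<in> T d)}" using m by simp
        then have "m \<in> snd ` {d. \<not> (x \<in> M d \<longleftrightarrow> x \<in> T d)}" by (rule rev_image_eqI) simp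
        then show ?thesis by (rule UnI2)
      qed
    qed
    then show ?thesis
      by (rule finite_subset[OF _ finite_UnI[OF cf[rule_format] finite_imageI[OF Dfin]]])
  qed
  from goodSD[where L=M, OF g Mcl Mcf]
  obtain hh where hh: "\<forall>x. finite {(n,m). hh n < m \<and> x \<in> M (n,m)}" ..
  show "\<exists>h. \<forall>x. finite {(n,m). h n < m \<and> x \<in> T (n,m)}"
  proof (intro exI allI)
    fix x
    have "{(n,m). hh n < m \<and> x \<in> T (n,m)} \<subseteq> {(n,m). hh n < m \<and> x \<in> M (n,m)} \<union> {d. \<not> (x \<in> M d \<longleftrightarrow> x \<in> T d)}"
      by auto
    then show "finite {(n,m). hh n < m \<and> x \<in> T (n,m)}"
      by (rule finite_subset[OF _ finite_UnI[OF hh[rule_format] Dfin]])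
  qed
qed

lemma P1_good:
  assumes P1: "bounded_ideal_convergence_property TYPE('a::topological_space)"
  shows "goodS {c::'a set. open c \<and> closed c}"
  unfolding goodS_def
proof (intro allI impI)
  fix L :: "nat \<times> nat \<Rightarrow> 'a set"
  assume Lcl: "\<forall>d. L d \<in> {c. open c \<and> closed c}" and cf: "\<forall>x n. finite {m. x \<in> L (n,m)}"
  define fs where "fs d = (indicator (L d) :: 'a \<Rightarrow> real)" for d
  have cont: "\<forall>d. continuous_on UNIV (fs d)"
    using ind_cont Lcl by (auto simp: fs_def)
  have conv: "Ib_converges fs (\<lambda>_. 0)"
    unfolding Ib_converges_def
  proof (intro allI impI)
    fix x and e :: real assume e: "e > 0"
    have "\<forall>n. \<exists>b. \<forall>m\<in>{m. x \<in> L (n,m)}. m \<le> b"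
      using cf finite_nat_set_iff_bounded_le by blast
    from choice[OF this] obtain hx where hx: "\<forall>n. \<forall>m\<in>{m. x \<in> L (n,m)}. m \<le> hx n" ..
    define B where "B = {d. \<not> \<bar>fs d x - 0\<bar> < e}"
    have eq: "{d. \<bar>fs d x - 0\<bar> < e} = UNIV - B" unfolding B_def by auto
    have "B \<subseteq> A_h hx"
    proof
      fix d assume "d \<in> B"
      then have "x \<in> L d" using e unfolding B_def fs_def by (cases "x \<in> L d") auto
      then show "d \<in> A_h hx" using hx unfolding A_h_def by (cases d) auto
    qed
    then have "B \<in> I_b" unfolding I_b_def by blast
    then show "{d. \<bar>fs d x - 0\<bar> < e} \<in> I_b_dual" unfolding I_b_dual_def using eq by blast
  qed
  have "\<exists>A\<in>I_b_dual. pointwise_conv_on A fs (\<lambda>_. 0)"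
    using P1[unfolded bounded_ideal_convergence_property_def, THEN spec[where x=fs]] cont conv by blast
  then obtain A where A: "A \<in> I_b_dual" "pointwise_conv_on A fs (\<lambda>_. 0)" by blast
  obtain B h where AB: "A = UNIV - B" "B \<subseteq> A_h h" using A(1) unfolding I_b_dual_def I_b_def by blast
  show "\<exists>h. \<forall>x. finite {(n,m). h n < m \<and> x \<in> L (n,m)}"
  proof (intro exI allI)
    fix x
    have "finite {d\<in>A. \<bar>fs d x - 0\<bar> \<ge> 1}" using A(2) unfolding pointwise_conv_on_def by auto
    moreover have "{(n,m). h n < m \<and> x \<in> L (n,m)} \<subseteq> {d\<in>A. \<bar>fs d x - 0\<bar> \<ge> 1}"
    proof
      fix d assume "d \<in> {(n,m). h n < m \<and> x \<in> L (n,m)}"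
      then obtain n m where d: "d = (n,m)" "h n < m" "x \<in> L (n,m)" by blast
      then have "d \<notin> A_h h" unfolding A_h_def by auto
      then have "d \<in> A" using AB by blast
      then show "d \<in> {d\<in>A. \<bar>fs d x - 0\<bar> \<ge> 1}" using d by (simp add: fs_def)
    qed
    ultimately show "finite {(n,m). h n < m \<and> x \<in> L (n,m)}" using finite_subset by blast
  qed
qed




lemma Ib_col:
  fixes fs :: "nat \<times> nat \<Rightarrow> 'a \<Rightarrow> real"
  assumes conv: "Ib_converges fs f" and e: "e > 0"
  shows "\<exists>h. \<forall>m. h < m \<longrightarrow> \<bar>fs (n,m) x - f x\<bar> < e"
proof -
  have "{d. \<bar>fs d x - f x\<bar> < e} \<in> I_b_dual" using conv e unfolding Ib_converges_def by blast
  then obtain B hh where B: "{d. \<bar>fs d x - f x\<bar> < e} = UNIV - B" "B \<subseteq> A_h hh"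
    unfolding I_b_dual_def I_b_def by blast
  show ?thesis
  proof (intro exI allI impI)
    fix m assume "hh n < m"
    then have "(n,m) \<notin> A_h hh" unfolding A_h_def by auto
    then have "(n,m) \<notin> B" using B(2) by blast
    then have "(n,m) \<in> {d. \<bar>fs d x - f x\<bar> < e}" using B(1) by blast
    then show "\<bar>fs (n,m) x - f x\<bar> < e" by simp
  qed
qed

lemma good_P4:
  fixes fs :: "nat \<times> nat \<Rightarrow> 'a::topological_space \<Rightarrow> real"
  assumes gb: "goodS (sets (borel::'a measure))"
    and fsm: "\<forall>d. fs d \<in> borel_measurable borel" and conv: "Ib_converges fs f"
  shows "\<exists>A\<in>I_b_dual. pointwise_conv_on A fs f"
proof -
  have fm: "f \<in> borel_measurable borel"
  proof (rule borel_measurable_LIMSEQ_real[where u="\<lambda>m x. fs (0,m) x"])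
    fix x :: 'a
    show "(\<lambda>m. fs (0,m) x) \<longlonglongrightarrow> f x"
      unfolding lim_sequentially dist_real_def
    proof (intro allI impI)
      fix r :: real assume "r > 0"
      from Ib_col[OF conv this, of 0 x] obtain h where h: "\<forall>m. h < m \<longrightarrow> \<bar>fs (0,m) x - f x\<bar> < r" ..
      show "\<exists>no. \<forall>n\<ge>no. \<bar>fs (0,n) x - f x\<bar> < r"
        using h by (intro exI[of _ "Suc h"]) auto
    qed
  next
    fix m show "(\<lambda>x. fs (0,m) x) \<in> borel_measurable borel" using fsm by simp
  qed
  define T where "T d = {x. inverse (real (Suc (snd (prod_decode (fst d))))) \<le> \<bar>fs (fst (prod_decode (fst d)), snd d) x - f x\<bar>}" for d
  have Tm: "T d \<in> sets borel" for d
  proof -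
    have "(\<lambda>x. \<bar>fs (fst (prod_decode (fst d)), snd d) x - f x\<bar>) \<in> borel_measurable borel"
      using fsm fm by (intro borel_measurable_abs borel_measurable_diff) auto
    then show ?thesis unfolding T_def by (rule meas)
  qed
  have Tcf: "finite {m. x \<in> T (p,m)}" for x p
  proof -
    obtain n k where nk: "prod_decode p = (n,k)" by (cases "prod_decode p")
    have "inverse (real (Suc k)) > 0" by simp
    from Ib_col[OF conv this, of n x] obtain h where h: "\<forall>m. h < m \<longrightarrow> \<bar>fs (n,m) x - f x\<bar> < inverse (real (Suc k))" ..
    have "{m. x \<in> T (p,m)} \<subseteq> {..h}"
    proof
      fix m assume "m \<in> {m. x \<in> T (p,m)}"
      then have "inverse (real (Suc k)) \<le> \<bar>fs (n,m) x - f x\<bar>" unfolding T_def using nk by simp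
      then show "m \<in> {..h}" using h by (meson atMost_iff not_le not_less)
    qed
    then show ?thesis by (rule finite_subset) simp
  qed
  from goodSD[where L=T, OF gb Tm Tcf]
  obtain h' where h': "\<forall>x. finite {(p,m). h' p < m \<and> x \<in> T (p,m)}" ..
  define h where "h n = (\<Sum>k\<le>n. h' (prod_encode (n,k)))" for n
  show ?thesis
  proof (rule bexI[of _ "UNIV - A_h h"])
    show "UNIV - A_h h \<in> I_b_dual" unfolding I_b_dual_def I_b_def by blast
    show "pointwise_conv_on (UNIV - A_h h) fs f" unfolding pointwise_conv_on_def
    proof (intro allI impI)
      fix x and e :: real assume e: "e > 0"
      obtain k0 where k0: "k0 > 0" "inverse (real k0) < e" using ex_inverse_of_nat_less[OF e] by blast
      define k where "k = k0 - 1"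
      have ke: "inverse (real (Suc k)) < e" using k0 unfolding k_def by simp
      define S1 where "S1 = (\<Union>n\<in>{..<k}. {n} \<times> {m. e \<le> \<bar>fs (n,m) x - f x\<bar>})"
      define S2 where "S2 = (\<lambda>(p,m). (fst (prod_decode p), m)) ` {(p,m). h' p < m \<and> x \<in> T (p,m)}"
      have fS1: "finite S1" unfolding S1_def
      proof (intro finite_UN_I finite_lessThan)
        fix n
        from Ib_col[OF conv e, of n x] obtain hn where hn: "\<forall>m. hn < m \<longrightarrow> \<bar>fs (n,m) x - f x\<bar> < e" ..
        have "{m. e \<le> \<bar>fs (n,m) x - f x\<bar>} \<subseteq> {..hn}"
          using hn by (auto simp: not_less[symmetric])
        then have "finite {m. e \<le> \<bar>fs (n,m) x - f x\<bar>}" by (rule finite_subset) simp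
        then show "finite ({n} \<times> {m. e \<le> \<bar>fs (n,m) x - f x\<bar>})" by simp
      qed
      have fS2: "finite S2" unfolding S2_def by (rule finite_imageI) (rule h'[rule_format])
      have "{d \<in> UNIV - A_h h. \<bar>fs d x - f x\<bar> \<ge> e} \<subseteq> S1 \<union> S2"
      proof
        fix d assume d: "d \<in> {d \<in> UNIV - A_h h. \<bar>fs d x - f x\<bar> \<ge> e}"
        obtain n m where nm: "d = (n,m)" by (cases d)
        have hm: "h n < m" using d nm unfolding A_h_def by auto
        have ge: "e \<le> \<bar>fs (n,m) x - f x\<bar>" using d nm by simp
        show "d \<in> S1 \<union> S2"
        proof (cases "n < k")
          case True
          then have "d \<in> S1" unfolding S1_def nm using ge by blast
          then show ?thesis by simp
        next
          case False
          define p where "p = prod_encode (n,k)"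
          have "h' p \<le> h n" unfolding h_def p_def
            using False by (intro member_le_sum) auto
          then have "h' p < m" using hm by simp
          moreover have "x \<in> T (p,m)" unfolding T_def p_def using ge ke by simp
          ultimately have "(p,m) \<in> {(p,m). h' p < m \<and> x \<in> T (p,m)}" by simp
          moreover have "d = (\<lambda>(p,m). (fst (prod_decode p), m)) (p,m)" unfolding p_def nm by simp
          ultimately have "d \<in> S2" unfolding S2_def by (rule rev_image_eqI)
          then show ?thesis by simp
        qed
      qed
      then show "finite {d \<in> UNIV - A_h h. \<bar>fs d x - f x\<bar> \<ge> e}"
        by (rule finite_subset) (use fS1 fS2 in simp)
    qed
  qed
qed


theorem mainTheorem15:
  assumes clopen_basis: "\<forall>U :: 'a::topological_space set. open U \<longrightarrow>
      (\<exists>C. countable C \<and> (\<forall>c\<in>C. open c \<and> closed c) \<and> U = \<Union>C)"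
  defines "P1 \<equiv> bounded_ideal_convergence_property TYPE('a)"
  defines "P2 \<equiv> (\<forall>fs :: nat \<times> nat \<Rightarrow> 'a \<Rightarrow> real.
        (\<forall>d. fs d \<in> borel_measurable borel) \<longrightarrow> Ib_converges fs (\<lambda>_. 0) \<longrightarrow>
        (\<exists>A \<in> I_b_dual. pointwise_conv_on A fs (\<lambda>_. 0)))"
  defines "P3 \<equiv> (\<forall>(fs :: nat \<times> nat \<Rightarrow> 'a \<Rightarrow> real) f.
        (\<forall>d. fs d \<in> borel_measurable borel) \<longrightarrow> f \<in> borel_measurable borel \<longrightarrow>
        Ib_converges fs f \<longrightarrow>
        (\<exists>A \<in> I_b_dual. pointwise_conv_on A fs f))"
  defines "P4 \<equiv> (\<forall>(fs :: nat \<times> nat \<Rightarrow> 'a \<Rightarrow> real) f.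
        (\<forall>d. fs d \<in> borel_measurable borel) \<longrightarrow>
        Ib_converges fs f \<longrightarrow>
        (\<exists>A \<in> I_b_dual. pointwise_conv_on A fs f))"
  shows "(P1 \<longleftrightarrow> P2) \<and> (P2 \<longleftrightarrow> P3) \<and> (P3 \<longleftrightarrow> P4)"
proof -
  have i1: "P4" if "P1"
  proof -
    have g: "goodS {c::'a set. open c \<and> closed c}" by (rule P1_good) (use that in \<open>simp add: P1_def\<close>)
    have gt: "goodS {B::'a set. tame B}" by (rule good_tame[OF g])
    have "sets (borel::'a measure) \<subseteq> {B::'a set. tame B}"
      using tame_borel[OF g clopen_basis] by blast
    then have gb: "goodS (sets (borel::'a measure))" by (rule goodS_mono[OF gt])
    show ?thesis unfolding P4_def using good_P4[OF gb] by blast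
  qed
  have i2: "P3" if "P4" using that unfolding P3_def P4_def by blast
  have i3: "P2" if "P3"
  proof -
    have "(\<lambda>_. 0::real) \<in> borel_measurable (borel::'a measure)" by simp
    then show ?thesis using that unfolding P2_def P3_def by blast
  qed
  have i4: "P1" if "P2"
    using that borel_measurable_continuous_onI
    unfolding P1_def P2_def bounded_ideal_convergence_property_def by blast
  show ?thesis using i1 i2 i3 i4 by blast
qed

end
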